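(* Let $\mathcal M$ be a structural causal model with discrete variables $C$, binary $X$ (values $x,x'$), discrete $Z$ and binary $Y$ (values $y,y'$), given by structural equations $X=f_X(C,U_X)$, $Z=f_Z(X,C,U_Z)$, $Y=f_Y(Z,C,U_Y)$, with $C,U_X,U_Z,U_Y$ mutually independent. Fix $c$ with $P(c)>0$. Then $$\max\{0,\ P(y_x\mid c)-P(y_{x'}\mid c),\ P(y\mid c)-P(y_{x'}\mid c),\ P(y_x\mid c)-P(y\mid c)\}\le P(y_x,y'_{x'}\mid c)$$ and $$P(y_x,y'_{x'}\mid c)\le\min\Big\{P(y_x\mid c),\ P(y'_{x'}\mid c),\ P(y,x\mid c)+P(y',x'\mid c),\ P(y_x\mid c)-P(y_{x'}\mid c)+P(y,x'\mid c)+P(y',x\mid c),$$ $$\qquad\sum_z\sum_{z'\ne z}\min\{P(y\mid z,c),P(y'\mid z',c)\}\cdot\min\{P(z\mid x,c),P(z'\mid x',c)\}\Big\},$$ where $z,z'$ range over values of $Z$ (with the conditional probabilities defined).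
   Context: For a value $x$ of $X$, $Y_x$ denotes the counterfactual variable "the value $Y$ would take had $X$ been set to $x$"; $y_x$ is the event $Y_x=y$. Unsubscripted probabilities such as $P(y\mid z,c)$, $P(z\mid x,c)$ are observational. Consistency: $X=x$ implies $Y_x=Y$. *)

theory Defs
  imports "HOL-Probability.Probability"
begin

definition SCM :: "'c pmf \<Rightarrow> 'ux pmf \<Rightarrow> 'uz pmf \<Rightarrow> 'uy pmf \<Rightarrow> ('c \<times> 'ux \<times> 'uz \<times> 'uy) pmf" where
  "SCM pC pUX pUZ pUY = pair_pmf pC (pair_pmf pUX (pair_pmf pUZ pUY))"

definition varC :: "('c \<times> 'ux \<times> 'uz \<times> 'uy) \<Rightarrow> 'c" where
  "varC = (\<lambda>(c, ux, uz, uy). c)"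

definition varX :: "('c \<Rightarrow> 'ux \<Rightarrow> bool) \<Rightarrow> ('c \<times> 'ux \<times> 'uz \<times> 'uy) \<Rightarrow> bool" where
  "varX fX = (\<lambda>(c, ux, uz, uy). fX c ux)"

definition varZ :: "('c \<Rightarrow> 'ux \<Rightarrow> bool) \<Rightarrow> (bool \<Rightarrow> 'c \<Rightarrow> 'uz \<Rightarrow> 'z)
    \<Rightarrow> ('c \<times> 'ux \<times> 'uz \<times> 'uy) \<Rightarrow> 'z" where
  "varZ fX fZ = (\<lambda>(c, ux, uz, uy). fZ (fX c ux) c uz)"

definition varY :: "('c \<Rightarrow> 'ux \<Rightarrow> bool) \<Rightarrow> (bool \<Rightarrow> 'c \<Rightarrow> 'uz \<Rightarrow> 'z) \<Rightarrow> ('z \<Rightarrow> 'c \<Rightarrow> 'uy \<Rightarrow> bool)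
    \<Rightarrow> ('c \<times> 'ux \<times> 'uz \<times> 'uy) \<Rightarrow> bool" where
  "varY fX fZ fY = (\<lambda>(c, ux, uz, uy). fY (fZ (fX c ux) c uz) c uy)"

text \<open>Counterfactual Y_x: the value Y would take had X been set to x.\<close>
definition cfY :: "(bool \<Rightarrow> 'c \<Rightarrow> 'uz \<Rightarrow> 'z) \<Rightarrow> ('z \<Rightarrow> 'c \<Rightarrow> 'uy \<Rightarrow> bool) \<Rightarrow> bool
    \<Rightarrow> ('c \<times> 'ux \<times> 'uz \<times> 'uy) \<Rightarrow> bool" where
  "cfY fZ fY x = (\<lambda>(c, ux, uz, uy). fY (fZ x c uz) c uy)"

definition cprob :: "'a pmf \<Rightarrow> ('a \<Rightarrow> bool) \<Rightarrow> ('a \<Rightarrow> bool) \<Rightarrow> real" where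
  "cprob M A B = measure_pmf.prob M {w. A w \<and> B w} / measure_pmf.prob M {w. B w}"

end

theory Submission imports Defs begin

lemma prod_prob:
  "measure_pmf.prob (pair_pmf M N) (A \<times> B) = measure_pmf.prob M A * measure_pmf.prob N B"
proof -
  have "emeasure (measure_pmf (pair_pmf M N)) (A\<times>B) = (\<integral>\<^sup>+x. indicator (A\<times>B) x \<partial>pair_pmf M N)"
    by (rule nn_integral_indicator[symmetric]) simp
  also have "\<dots> = (\<integral>\<^sup>+a. \<integral>\<^sup>+b. indicator A a * indicator B b \<partial>N \<partial>M)"
    by (simp add: nn_integral_pair_pmf' indicator_times)
  also have "\<dots> = (\<integral>\<^sup>+a. indicator A a * emeasure N B \<partial>M)"
    by (simp add: nn_integral_cmult)
  also have "\<dots> = emeasure N B * emeasure M A"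
    by (simp add: nn_integral_multc mult.commute)
  finally have "ennreal (measure_pmf.prob (pair_pmf M N) (A \<times> B)) = ennreal (measure_pmf.prob M A * measure_pmf.prob N B)"
    by (simp add: measure_pmf.emeasure_eq_measure ennreal_mult mult.commute)
  then show ?thesis by (simp add: ennreal_inj)
qed
lemma probC:
  "measure_pmf.prob (pair_pmf pC N) {w. P w \<and> fst w = c} = pmf pC c * measure_pmf.prob N {r. P (c, r)}"
proof -
  have "{w. P w \<and> fst w = c} = {c} \<times> {r. P (c, r)}" by auto
  then show ?thesis by (simp add: prod_prob measure_pmf_single)
qed

lemma cprobC:
  assumes "pmf pC c > 0"
  shows "cprob (pair_pmf pC N) A (\<lambda>w. fst w = c) = measure_pmf.prob N {r. A (c, r)}"
  using probC[of pC N A c] probC[of pC N "\<lambda>_. True" c] assms by (simp add: cprob_def)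

lemma cprobC2:
  assumes "pmf pC c > 0"
  shows "cprob (pair_pmf pC N) A (\<lambda>w. B w \<and> fst w = c) =
     measure_pmf.prob N {r. A (c, r) \<and> B (c, r)} / measure_pmf.prob N {r. B (c, r)}"
  using probC[of pC N "\<lambda>w. A w \<and> B w" c] probC[of pC N B c] assms by (simp add: cprob_def conj_assoc)

lemma UNIV_bool3: "(UNIV :: (bool \<times> bool \<times> bool) set) =
  {(False,False,False),(False,False,True),(False,True,False),(False,True,True),
   (True,False,False),(True,False,True),(True,True,False),(True,True,True)}"
  by auto

lemma sum_bool3: "(\<Sum>t\<in>(UNIV :: (bool \<times> bool \<times> bool) set). f t) =
  f (False,False,False) + f (False,False,True) + f (False,True,False) + f (False,True,True) +
  f (True,False,False) + f (True,False,True) + f (True,True,False) + f (True,True,True)"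
  unfolding UNIV_bool3 by (simp add: algebra_simps)

lemma prob_sum3:
  fixes N :: "'n pmf" and a u v :: "'n \<Rightarrow> bool"
  defines "p \<equiv> \<lambda>A B C. measure_pmf.prob N {r. a r = A \<and> u r = B \<and> v r = C}"
  shows "measure_pmf.prob N {r. \<Phi> (a r) (u r) (v r)} = (if \<Phi> False False False then p False False False else 0) +
    (if \<Phi> False False True then p False False True else 0) +
    (if \<Phi> False True False then p False True False else 0) +
    (if \<Phi> False True True then p False True True else 0) +
    (if \<Phi> True False False then p True False False else 0) +
    (if \<Phi> True False True then p True False True else 0) +
    (if \<Phi> True True False then p True True False else 0) +
    (if \<Phi> True True True then p True True True else 0)" (is "_ = ?rhs")
proof -
  define g where "g r = (a r, u r, v r)" for r
  have "measure_pmf.prob N {r. \<Phi> (a r) (u r) (v r)} = measure_pmf.prob (map_pmf g N) {t. \<Phi> (fst t) (fst (snd t)) (snd (snd t))}"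
    by (simp add: g_def vimage_def)
  also have "\<dots> = (\<Sum>t\<in>UNIV. if \<Phi> (fst t) (fst (snd t)) (snd (snd t)) then pmf (map_pmf g N) t else 0)"
    by (subst measure_measure_pmf_finite) (simp_all add: sum.If_cases Int_def)
  also have "\<dots> = ?rhs"
    unfolding sum_bool3 by (simp add: pmf_map vimage_def g_def p_def)
  finally show ?thesis .
qed

lemma partsAB:
  fixes N :: "'n pmf" and a u v w :: "'n \<Rightarrow> bool" and x y :: bool
  assumes cons: "\<And>r. w r = (if a r = x then u r else v r)"
  shows "Max {0, measure_pmf.prob N {r. u r = y} - measure_pmf.prob N {r. v r = y},
               measure_pmf.prob N {r. w r = y} - measure_pmf.prob N {r. v r = y},
               measure_pmf.prob N {r. u r = y} - measure_pmf.prob N {r. w r = y}}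
           \<le> measure_pmf.prob N {r. u r = y \<and> v r = (\<not> y)}
     \<and> measure_pmf.prob N {r. u r = y \<and> v r = (\<not> y)}
           \<le> Min {measure_pmf.prob N {r. u r = y}, measure_pmf.prob N {r. v r = (\<not> y)},
                  measure_pmf.prob N {r. w r = y \<and> a r = x} + measure_pmf.prob N {r. w r = (\<not> y) \<and> a r = (\<not> x)},
                  measure_pmf.prob N {r. u r = y} - measure_pmf.prob N {r. v r = y}
                   + measure_pmf.prob N {r. w r = y \<and> a r = (\<not> x)} + measure_pmf.prob N {r. w r = (\<not> y) \<and> a r = x}}"
proof -
  define p where "p A B C = measure_pmf.prob N {r. a r = A \<and> u r = B \<and> v r = C}" for A B C
  have nn: "\<And>A B C. 0 \<le> p A B C" by (simp add: p_def)
  have S: "\<And>\<Phi>. measure_pmf.prob N {r. \<Phi> (a r) (u r) (v r)} =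
    (if \<Phi> False False False then p False False False else 0) +
    (if \<Phi> False False True then p False False True else 0) +
    (if \<Phi> False True False then p False True False else 0) +
    (if \<Phi> False True True then p False True True else 0) +
    (if \<Phi> True False False then p True False False else 0) +
    (if \<Phi> True False True then p True False True else 0) +
    (if \<Phi> True True False then p True True False else 0) +
    (if \<Phi> True True True then p True True True else 0)"
    unfolding p_def by (rule prob_sum3)
  have w_eq: "w = (\<lambda>r. if a r = x then u r else v r)" by (rule ext) (simp add: cons)
  note e1 = S[of "\<lambda>A B C. B = y"]
  note e2 = S[of "\<lambda>A B C. C = y"]
  note e3 = S[of "\<lambda>A B C. (if A = x then B else C) = y"]
  note e4 = S[of "\<lambda>A B C. B = y \<and> C = (\<not> y)"]
  note e5 = S[of "\<lambda>A B C. C = (\<not> y)"]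
  note e6 = S[of "\<lambda>A B C. (if A = x then B else C) = y \<and> A = x"]
  note e7 = S[of "\<lambda>A B C. (if A = x then B else C) = (\<not> y) \<and> A = (\<not> x)"]
  note e8 = S[of "\<lambda>A B C. (if A = x then B else C) = y \<and> A = (\<not> x)"]
  note e9 = S[of "\<lambda>A B C. (if A = x then B else C) = (\<not> y) \<and> A = x"]
  show ?thesis
    unfolding w_eq e1 e2 e3 e4 e5 e6 e7 e8 e9
    using nn[of False False False] nn[of False False True] nn[of False True False] nn[of False True True]
      nn[of True False False] nn[of True False True] nn[of True True False] nn[of True True True]
    by (cases x; cases y; simp; linarith)
qed

lemma prod3:
  "measure_pmf.prob (pair_pmf A (pair_pmf B C)) {r. S (fst r) (fst (snd r)) \<and> T (snd (snd r))}
   = measure_pmf.prob (pair_pmf A B) {p. S (fst p) (snd p)} * measure_pmf.prob C {c. T c}"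
proof -
  have "emeasure (measure_pmf (pair_pmf A (pair_pmf B C))) {r. S (fst r) (fst (snd r)) \<and> T (snd (snd r))}
     = (\<integral>\<^sup>+r. indicator {r. S (fst r) (fst (snd r)) \<and> T (snd (snd r))} r \<partial>pair_pmf A (pair_pmf B C))"
    by (rule nn_integral_indicator[symmetric]) simp
  also have "\<dots> = (\<integral>\<^sup>+a. \<integral>\<^sup>+b. \<integral>\<^sup>+c. indicator {p. S (fst p) (snd p)} (a,b) * indicator {c. T c} c \<partial>C \<partial>B \<partial>A)"
    by (simp add: nn_integral_pair_pmf' indicator_def of_bool_conj)
  also have "\<dots> = (\<integral>\<^sup>+a. \<integral>\<^sup>+b. indicator {p. S (fst p) (snd p)} (a,b) * emeasure C {c. T c} \<partial>B \<partial>A)"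
    by (simp add: nn_integral_cmult)
  also have "\<dots> = (\<integral>\<^sup>+p. indicator {p. S (fst p) (snd p)} p \<partial>pair_pmf A B) * emeasure C {c. T c}"
    by (simp add: nn_integral_multc nn_integral_pair_pmf')
  also have "\<dots> = emeasure (measure_pmf (pair_pmf A B)) {p. S (fst p) (snd p)} * emeasure C {c. T c}"
    by (subst nn_integral_indicator) simp_all
  finally have "ennreal (measure_pmf.prob (pair_pmf A (pair_pmf B C)) {r. S (fst r) (fst (snd r)) \<and> T (snd (snd r))})
     = ennreal (measure_pmf.prob (pair_pmf A B) {p. S (fst p) (snd p)} * measure_pmf.prob C {c. T c})"
    by (simp add: measure_pmf.emeasure_eq_measure ennreal_mult)
  then show ?thesis by (simp add: ennreal_inj)
qed

lemma arith5:
  fixes d a a' h b b' s s' :: real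
  assumes "0 \<le> d" "d \<le> a" "d \<le> a'" "0 \<le> h" "h \<le> b" "h \<le> b'" "0 \<le> b" "0 \<le> b'" "0 \<le> s" "0 \<le> s'"
    "s = 0 \<Longrightarrow> a = 0" "s' = 0 \<Longrightarrow> a' = 0"
  shows "d * h \<le> min (s * b / s) (s' * b' / s') * min a a'"
proof (cases "s = 0 \<or> s' = 0")
  case True
  then have "d = 0" using assms by auto
  moreover have "0 \<le> min (s * b / s) (s' * b' / s') * min a a'"
    using assms by (intro mult_nonneg_nonneg) auto
  ultimately show ?thesis by simp
next
  case False
  then have "s > 0" "s' > 0" using assms by auto
  then have "min (s * b / s) (s' * b' / s') = min b b'" by simp
  moreover have "h * d \<le> min b b' * min a a'"
    using assms by (intro mult_mono) auto
  ultimately show ?thesis by (simp add: mult.commute)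
qed

lemma part5:
  fixes pUX :: "'ux pmf" and pUZ :: "'uz pmf" and pUY :: "'uy pmf"
    and gX :: "'ux \<Rightarrow> bool" and gZ :: "bool \<Rightarrow> 'uz \<Rightarrow> 'z" and gY :: "'z \<Rightarrow> 'uy \<Rightarrow> bool"
    and Xf :: "'ux \<times> 'uz \<times> 'uy \<Rightarrow> bool" and Zf :: "'ux \<times> 'uz \<times> 'uy \<Rightarrow> 'z"
    and Yf Yxf Yxf' :: "'ux \<times> 'uz \<times> 'uy \<Rightarrow> bool" and x y :: bool
  assumes hX: "Xf = (\<lambda>r. gX (fst r))"
    and hZ: "Zf = (\<lambda>r. gZ (gX (fst r)) (fst (snd r)))"
    and hY: "Yf = (\<lambda>r. gY (gZ (gX (fst r)) (fst (snd r))) (snd (snd r)))"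
    and hYx: "Yxf = (\<lambda>r. gY (gZ x (fst (snd r))) (snd (snd r)))"
    and hYx': "Yxf' = (\<lambda>r. gY (gZ (\<not> x) (fst (snd r))) (snd (snd r)))"
    and N_def: "N = pair_pmf pUX (pair_pmf pUZ pUY)"
    and px: "measure_pmf.prob N {r. Xf r = x} > 0"
    and px': "measure_pmf.prob N {r. Xf r = (\<not> x)} > 0"
  shows "ennreal (measure_pmf.prob N {r. Yxf r = y \<and> Yxf' r = (\<not> y)})
    \<le> (\<integral>\<^sup>+ p. ennreal (min (measure_pmf.prob N {r. Yf r = y \<and> Zf r = fst p} / measure_pmf.prob N {r. Zf r = fst p})
                             (measure_pmf.prob N {r. Yf r = (\<not> y) \<and> Zf r = snd p} / measure_pmf.prob N {r. Zf r = snd p})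
                       * min (measure_pmf.prob N {r. Zf r = fst p \<and> Xf r = x} / measure_pmf.prob N {r. Xf r = x})
                             (measure_pmf.prob N {r. Zf r = snd p \<and> Xf r = (\<not> x)} / measure_pmf.prob N {r. Xf r = (\<not> x)}))
         \<partial>count_space {(z, z'). z \<noteq> z'})"
proof -
  define Q where "Q = pair_pmf pUZ pUY"
  define D where "D = map_pmf (\<lambda>uz. (gZ x uz, gZ (\<not> x) uz)) pUZ"
  define Hm where "Hm z z' = measure_pmf.prob pUY {uy. gY z uy = y \<and> gY z' uy = (\<not> y)}" for z z'
  define E where "E = {q. gY (gZ x (fst q)) (snd q) = y \<and> gY (gZ (\<not> x) (fst q)) (snd q) = (\<not> y)}"
  define az where "az z = measure_pmf.prob pUZ {uz. gZ x uz = z}" for z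
  define az' where "az' z = measure_pmf.prob pUZ {uz. gZ (\<not> x) uz = z}" for z
  define bz where "bz z = measure_pmf.prob pUY {uy. gY z uy = y}" for z
  define bz' where "bz' z = measure_pmf.prob pUY {uy. gY z uy = (\<not> y)}" for z
  define sz where "sz z = measure_pmf.prob (pair_pmf pUX pUZ) {q. gZ (gX (fst q)) (snd q) = z}" for z
  define px0 where "px0 = measure_pmf.prob pUX {ux. gX ux = x}"
  define px1 where "px1 = measure_pmf.prob pUX {ux. gX ux = (\<not> x)}"
  have "{r. Yxf r = y \<and> Yxf' r = (\<not> y)} = UNIV \<times> E"
    by (auto simp: hYx hYx' E_def)
  then have st1: "measure_pmf.prob N {r. Yxf r = y \<and> Yxf' r = (\<not> y)} = measure_pmf.prob Q E"
    by (simp add: N_def Q_def prod_prob)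
  have Hmnn: "0 \<le> Hm z z'" for z z' by (simp add: Hm_def)
  have Hm0: "Hm z z = 0" for z
  proof -
    have "{uy. gY z uy = y \<and> gY z uy = (\<not> y)} = {}" by auto
    then show ?thesis unfolding Hm_def by (metis measure_empty)
  qed
  have "emeasure (measure_pmf Q) E = (\<integral>\<^sup>+q. indicator E q \<partial>Q)"
    by (rule nn_integral_indicator[symmetric]) simp
  also have "\<dots> = (\<integral>\<^sup>+uz. \<integral>\<^sup>+uy. indicator {uy. gY (gZ x uz) uy = y \<and> gY (gZ (\<not> x) uz) uy = (\<not> y)} uy \<partial>pUY \<partial>pUZ)"
    by (simp add: Q_def nn_integral_pair_pmf' E_def indicator_def)
  also have "\<dots> = (\<integral>\<^sup>+uz. ennreal (Hm (gZ x uz) (gZ (\<not> x) uz)) \<partial>pUZ)"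
    by (simp add: Hm_def measure_pmf.emeasure_eq_measure)
  also have "\<dots> = (\<integral>\<^sup>+p. ennreal (Hm (fst p) (snd p)) \<partial>D)"
    by (simp add: D_def)
  also have "\<dots> = (\<integral>\<^sup>+p. ennreal (pmf D p) * ennreal (Hm (fst p) (snd p)) \<partial>count_space UNIV)"
    by (rule nn_integral_measure_pmf)
  also have "\<dots> = (\<integral>\<^sup>+p. ennreal (pmf D p * Hm (fst p) (snd p)) \<partial>count_space {(z, z'). z \<noteq> z'})"
    by (subst (2) nn_integral_count_space_indicator)
       (auto intro!: nn_integral_cong simp: Hm0 Hmnn ennreal_mult indicator_def)
  finally have st2: "ennreal (measure_pmf.prob N {r. Yxf r = y \<and> Yxf' r = (\<not> y)}) =
     (\<integral>\<^sup>+p. ennreal (pmf D p * Hm (fst p) (snd p)) \<partial>count_space {(z, z'). z \<noteq> z'})"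
    by (simp add: st1 measure_pmf.emeasure_eq_measure)
  have eX: "measure_pmf.prob N {r. Xf r = x} = px0"
  proof -
    have "{r. Xf r = x} = {ux. gX ux = x} \<times> UNIV" by (auto simp: hX)
    then show ?thesis by (simp add: N_def prod_prob px0_def)
  qed
  have eX': "measure_pmf.prob N {r. Xf r = (\<not> x)} = px1"
  proof -
    have "{r. Xf r = (\<not> x)} = {ux. gX ux = (\<not> x)} \<times> UNIV" by (auto simp: hX)
    then show ?thesis by (simp add: N_def prod_prob px1_def)
  qed
  have eZX: "measure_pmf.prob N {r. Zf r = z \<and> Xf r = x} = px0 * az z" for z
  proof -
    have "{r. Zf r = z \<and> Xf r = x} = {ux. gX ux = x} \<times> ({uz. gZ x uz = z} \<times> UNIV)" by (auto simp: hX hZ)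
    then show ?thesis by (simp add: N_def prod_prob px0_def az_def)
  qed
  have eZX': "measure_pmf.prob N {r. Zf r = z \<and> Xf r = (\<not> x)} = px1 * az' z" for z
  proof -
    have "{r. Zf r = z \<and> Xf r = (\<not> x)} = {ux. gX ux = (\<not> x)} \<times> ({uz. gZ (\<not> x) uz = z} \<times> UNIV)" by (auto simp: hX hZ)
    then show ?thesis by (simp add: N_def prod_prob px1_def az'_def)
  qed
  have eZ: "measure_pmf.prob N {r. Zf r = z} = sz z" for z
    using prod3[of pUX pUZ pUY "\<lambda>a b. gZ (gX a) b = z" "\<lambda>_. True"]
    by (simp add: N_def hZ sz_def)
  have eYZ: "measure_pmf.prob N {r. Yf r = y \<and> Zf r = z} = sz z * bz z" for z
  proof -
    have "{r. Yf r = y \<and> Zf r = z} = {r. gZ (gX (fst r)) (fst (snd r)) = z \<and> gY z (snd (snd r)) = y}"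
      by (auto simp: hY hZ)
    then show ?thesis
      using prod3[of pUX pUZ pUY "\<lambda>a b. gZ (gX a) b = z" "\<lambda>c. gY z c = y"]
      by (simp add: N_def sz_def bz_def)
  qed
  have eYZ': "measure_pmf.prob N {r. Yf r = (\<not> y) \<and> Zf r = z} = sz z * bz' z" for z
  proof -
    have "{r. Yf r = (\<not> y) \<and> Zf r = z} = {r. gZ (gX (fst r)) (fst (snd r)) = z \<and> gY z (snd (snd r)) = (\<not> y)}"
      by (auto simp: hY hZ)
    then show ?thesis
      using prod3[of pUX pUZ pUY "\<lambda>a b. gZ (gX a) b = z" "\<lambda>c. gY z c = (\<not> y)"]
      by (simp add: N_def sz_def bz'_def)
  qed
  have px0: "px0 > 0" using px eX by simp
  have px1: "px1 > 0" using px' eX' by simp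
  have szx: "sz z \<ge> px0 * az z" for z
  proof -
    have "px0 * az z = measure_pmf.prob (pair_pmf pUX pUZ) ({ux. gX ux = x} \<times> {uz. gZ x uz = z})"
      by (simp add: prod_prob px0_def az_def)
    also have "\<dots> \<le> sz z" unfolding sz_def
      by (rule measure_pmf.finite_measure_mono) auto
    finally show ?thesis .
  qed
  have szx': "sz z \<ge> px1 * az' z" for z
  proof -
    have "px1 * az' z = measure_pmf.prob (pair_pmf pUX pUZ) ({ux. gX ux = (\<not> x)} \<times> {uz. gZ (\<not> x) uz = z})"
      by (simp add: prod_prob px1_def az'_def)
    also have "\<dots> \<le> sz z" unfolding sz_def
      by (rule measure_pmf.finite_measure_mono) auto
    finally show ?thesis .
  qed
  have pw: "pmf D p * Hm (fst p) (snd p) \<le>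
      min (sz (fst p) * bz (fst p) / sz (fst p)) (sz (snd p) * bz' (snd p) / sz (snd p)) * min (az (fst p)) (az' (snd p))" for p
  proof (rule arith5)
    have pD: "pmf D p = measure_pmf.prob pUZ {uz. gZ x uz = fst p \<and> gZ (\<not> x) uz = snd p}"
      by (simp add: D_def pmf_map vimage_def prod_eq_iff)
    show "pmf D p \<le> az (fst p)" unfolding pD az_def
      by (rule measure_pmf.finite_measure_mono) auto
    show "pmf D p \<le> az' (snd p)" unfolding pD az'_def
      by (rule measure_pmf.finite_measure_mono) auto
    show "Hm (fst p) (snd p) \<le> bz (fst p)" unfolding Hm_def bz_def
      by (rule measure_pmf.finite_measure_mono) auto
    show "Hm (fst p) (snd p) \<le> bz' (snd p)" unfolding Hm_def bz'_def
      by (rule measure_pmf.finite_measure_mono) auto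
    show "0 \<le> pmf D p" by simp
    show "0 \<le> Hm (fst p) (snd p)" by (simp add: Hm_def)
    show "0 \<le> bz (fst p)" by (simp add: bz_def)
    show "0 \<le> bz' (snd p)" by (simp add: bz'_def)
    show "0 \<le> sz (fst p)" by (simp add: sz_def)
    show "0 \<le> sz (snd p)" by (simp add: sz_def)
    show "az (fst p) = 0" if "sz (fst p) = 0"
      using szx[of "fst p"] that px0 by (simp add: az_def zero_less_mult_iff mult_le_0_iff measure_nonneg) (smt (verit) measure_nonneg mult_pos_pos)
    show "az' (snd p) = 0" if "sz (snd p) = 0"
      using szx'[of "snd p"] that px1 by (simp add: az'_def zero_less_mult_iff mult_le_0_iff measure_nonneg) (smt (verit) measure_nonneg mult_pos_pos)
  qed
  show ?thesis
    unfolding st2 eX eX' eZX eZX' eZ eYZ eYZ'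
    using px0 px1
    by (intro nn_integral_mono ennreal_leI) (use pw in simp)
qed
theorem lemma6:
  fixes pC :: "'c pmf" and pUX :: "'ux pmf" and pUZ :: "'uz pmf" and pUY :: "'uy pmf"
    and fX :: "'c \<Rightarrow> 'ux \<Rightarrow> bool"
    and fZ :: "bool \<Rightarrow> 'c \<Rightarrow> 'uz \<Rightarrow> 'z"
    and fY :: "'z \<Rightarrow> 'c \<Rightarrow> 'uy \<Rightarrow> bool"
    and x y :: bool and c :: 'c
  defines "M \<equiv> SCM pC pUX pUZ pUY"
    and "x' \<equiv> \<not> x" and "y' \<equiv> \<not> y"
    and "C \<equiv> varC" and "X \<equiv> varX fX" and "Z \<equiv> varZ fX fZ" and "Y \<equiv> varY fX fZ fY"
    and "Yx \<equiv> cfY fZ fY x" and "Yx' \<equiv> cfY fZ fY (\<not> x)"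
  assumes Pc: "measure_pmf.prob M {w. C w = c} > 0"
  shows
    "Max {0,
          cprob M (\<lambda>w. Yx w = y) (\<lambda>w. C w = c) - cprob M (\<lambda>w. Yx' w = y) (\<lambda>w. C w = c),
          cprob M (\<lambda>w. Y w = y) (\<lambda>w. C w = c) - cprob M (\<lambda>w. Yx' w = y) (\<lambda>w. C w = c),
          cprob M (\<lambda>w. Yx w = y) (\<lambda>w. C w = c) - cprob M (\<lambda>w. Y w = y) (\<lambda>w. C w = c)}
       \<le> cprob M (\<lambda>w. Yx w = y \<and> Yx' w = y') (\<lambda>w. C w = c)
     \<and> cprob M (\<lambda>w. Yx w = y \<and> Yx' w = y') (\<lambda>w. C w = c)
       \<le> Min {cprob M (\<lambda>w. Yx w = y) (\<lambda>w. C w = c),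
              cprob M (\<lambda>w. Yx' w = y') (\<lambda>w. C w = c),
              cprob M (\<lambda>w. Y w = y \<and> X w = x) (\<lambda>w. C w = c)
                + cprob M (\<lambda>w. Y w = y' \<and> X w = x') (\<lambda>w. C w = c),
              cprob M (\<lambda>w. Yx w = y) (\<lambda>w. C w = c) - cprob M (\<lambda>w. Yx' w = y) (\<lambda>w. C w = c)
                + cprob M (\<lambda>w. Y w = y \<and> X w = x') (\<lambda>w. C w = c)
                + cprob M (\<lambda>w. Y w = y' \<and> X w = x) (\<lambda>w. C w = c)}
     \<and> ((measure_pmf.prob M {w. X w = x \<and> C w = c} > 0 \<and>
         measure_pmf.prob M {w. X w = x' \<and> C w = c} > 0) \<longrightarrow>
        ennreal (cprob M (\<lambda>w. Yx w = y \<and> Yx' w = y') (\<lambda>w. C w = c))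
          \<le> (\<integral>\<^sup>+ p. 
                ennreal (min (cprob M (\<lambda>w. Y w = y) (\<lambda>w. Z w = fst p \<and> C w = c))
                             (cprob M (\<lambda>w. Y w = y') (\<lambda>w. Z w = snd p \<and> C w = c))
                       * min (cprob M (\<lambda>w. Z w = fst p) (\<lambda>w. X w = x \<and> C w = c))
                             (cprob M (\<lambda>w. Z w = snd p) (\<lambda>w. X w = x' \<and> C w = c))) \<partial>count_space {(z, z'). z \<noteq> z'}))"
proof -
  define N where "N = pair_pmf pUX (pair_pmf pUZ pUY)"
  have MN: "M = pair_pmf pC N" by (simp add: M_def SCM_def N_def)
  have Cfst: "C = fst" by (rule ext) (simp add: C_def varC_def split_beta)
  have k3: "\<And>P. measure_pmf.prob M {w. P w \<and> C w = c} = pmf pC c * measure_pmf.prob N {r. P (c, r)}"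
    unfolding MN Cfst by (rule probC)
  have pc: "pmf pC c > 0"
  proof -
    have "{w. C w = c} = {w. True \<and> C w = c}" by simp
    then show ?thesis using Pc k3[of "\<lambda>_. True"] by simp
  qed
  have k1: "\<And>A. cprob M A (\<lambda>w. C w = c) = measure_pmf.prob N {r. A (c, r)}"
    unfolding MN Cfst by (rule cprobC[OF pc])
  have k2: "\<And>A B. cprob M A (\<lambda>w. B w \<and> C w = c) =
     measure_pmf.prob N {r. A (c, r) \<and> B (c, r)} / measure_pmf.prob N {r. B (c, r)}"
    unfolding MN Cfst by (rule cprobC2[OF pc])
  have cons: "\<And>r. Y (c, r) = (if X (c, r) = x then Yx (c, r) else Yx' (c, r))"
    by (auto simp: Y_def X_def Yx_def Yx'_def varY_def varX_def cfY_def split_beta)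
  note AB = partsAB[where N=N and a="\<lambda>r. X (c, r)" and u="\<lambda>r. Yx (c, r)" and v="\<lambda>r. Yx' (c, r)"
      and w="\<lambda>r. Y (c, r)" and x=x and y=y, OF cons]
  note P5 = part5[where pUX=pUX and pUZ=pUZ and pUY=pUY and gX="fX c" and gZ="\<lambda>b. fZ b c" and gY="\<lambda>z. fY z c"
     and Xf="\<lambda>r. X (c, r)" and Zf="\<lambda>r. Z (c, r)" and Yf="\<lambda>r. Y (c, r)" and Yxf="\<lambda>r. Yx (c, r)"
     and Yxf'="\<lambda>r. Yx' (c, r)" and N=N and x=x and y=y]
  have P5': "measure_pmf.prob N {r. X (c, r) = x} > 0 \<Longrightarrow> measure_pmf.prob N {r. X (c, r) = (\<not> x)} > 0 \<Longrightarrow>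
    ennreal (measure_pmf.prob N {r. Yx (c, r) = y \<and> Yx' (c, r) = (\<not> y)})
    \<le> (\<integral>\<^sup>+ p. ennreal (min (measure_pmf.prob N {r. Y (c, r) = y \<and> Z (c, r) = fst p} / measure_pmf.prob N {r. Z (c, r) = fst p})
                             (measure_pmf.prob N {r. Y (c, r) = (\<not> y) \<and> Z (c, r) = snd p} / measure_pmf.prob N {r. Z (c, r) = snd p})
                       * min (measure_pmf.prob N {r. Z (c, r) = fst p \<and> X (c, r) = x} / measure_pmf.prob N {r. X (c, r) = x})
                             (measure_pmf.prob N {r. Z (c, r) = snd p \<and> X (c, r) = (\<not> x)} / measure_pmf.prob N {r. X (c, r) = (\<not> x)}))
         \<partial>count_space {(z, z'). z \<noteq> z'})"
    by (rule P5) (auto simp: X_def Z_def Y_def Yx_def Yx'_def varX_def varZ_def varY_def cfY_def N_def split_beta)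
  show ?thesis
    unfolding x'_def y'_def k1 k2 k3
    using AB P5' pc by (simp add: zero_less_mult_iff)
qed
end
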